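(* Let $G$ be a finite two-player zero-sum extensive form game with perfect recall, and run CFR or CFR$^+$ with alternating updates (Player 1 updated first) on $G$. Let $t\ge 0$, let $p$ be the player about to be updated at time $t$, let $\sigma^t_p$ be $p$'s current strategy, and let $\sigma_o$ be the opponent strategy used in $p$'s update values, i.e. $\sigma_o=\sigma^t_2$ if $p=1$ and $\sigma_o=\sigma^{t+1}_1$ if $p=2$. Then $$u_p^{(\sigma^{t+1}_p,\sigma_o)}\ge u_p^{(\sigma^t_p,\sigma_o)}.$$
   Context: Extensive form game: a finite tree of histories $h$ (sequences of actions from the root $\emptyset$), terminal histories $Z$, actions $A(h)$ at nonterminal $h$, an acting player $P(h)\in\{1,2,c\}$ where $c$ is chance acting with fixed probabilities, utilities $u_1(z)=-u_2(z)$ at terminals, and for each player a partition of that player's histories into information sets $I$ (all $h\in I$ share the same legal actions $A(I)$). Perfect recall: any two histories in one information set of player $p$ pass through the same sequence of player-$p$ information sets and player-$p$ actions. A strategy $\sigma_p$ gives a distribution $\boldsymbol{\sigma}_p(I)$ over $A(I)$ for each player-$p$ information set; $u^{\boldsymbol\sigma}_p$ is player $p$'s expected utility under profile $\boldsymbol\sigma$. For a profile $\boldsymbol{\sigma}$ and terminal $z$, $\pi^{\boldsymbol\sigma}_{-p}(z)$ is the product of the probabilities of all actions on the path to $z$ taken by chance and by $p$'s opponent; for $h\sqsubseteq z$, $\pi^{\boldsymbol\sigma}_p(z\mid h)$ is the product of the probabilities under $\sigma_p$ of player $p$'s actions on the path from $h$ to $z$. Counterfactual values: $v^{\boldsymbol\sigma}_p(h):=\sum_{z\in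 Z,\,h\sqsubseteq z}\pi^{\boldsymbol\sigma}_{-p}(z)\pi^{\boldsymbol\sigma}_p(z\mid h)u_p(z)$, and for an information set $I$ of player $p$, $v^{\boldsymbol\sigma}(I)_a:=\sum_{h\in I}v^{\boldsymbol\sigma}_p(ha)$, $a\in A(I)$. Let $x^+=\max(x,0)$ componentwise and $\boldsymbol{\sigma}_{\mathrm{rm}}(\boldsymbol{x}):=\boldsymbol{x}^+/(\boldsymbol{1}\cdot\boldsymbol{x}^+)$ if some $x_a>0$, else $\boldsymbol{1}/|A|$. CFR with alternating updates keeps for each information set $I$ a vector $\boldsymbol{r}^t(I)$ with $\boldsymbol{r}^0(I)=\boldsymbol 0$, plays $\boldsymbol\sigma^t(I)=\boldsymbol{\sigma}_{\mathrm{rm}}(\boldsymbol{r}^t(I))$, and updates $\boldsymbol{r}^{t+1}(I)=\boldsymbol{r}^t(I)+\boldsymbol{v}^t(I)-(\boldsymbol\sigma^t(I)\cdot\boldsymbol{v}^t(I))\boldsymbol 1$; CFR$^+$ instead keeps $\boldsymbol{q}^t(I)$ with $\boldsymbol{q}^0(I)=\boldsymbol 0$, $\boldsymbol\sigma^t(I)=\boldsymbol{\sigma}_{\mathrm{rm}}(\boldsymbol{q}^t(I))$, $\boldsymbol{q}^{t+1}(I)=(\boldsymbol{q}^t(I)+\boldsymbol{v}^t(I)-(\boldsymbol\sigma^t(I)\cdot\boldsymbol{v}^t(I))\boldsymbol 1)^+$. In both, $\boldsymbol{v}^t(I)=\boldsymbol{v}^{(\sigma^t_1,\sigma^t_2)}(I)$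 if $I$ belongs to Player 1 and $\boldsymbol{v}^t(I)=\boldsymbol{v}^{(\sigma^{t+1}_1,\sigma^t_2)}(I)$ if $I$ belongs to Player 2. *)

theory Defs
  imports Complex_Main "HOL-Library.Sublist"
begin

datatype pl = P1 | P2 | Ch

text \<open>Histories are lists of actions; util is the
utility of Player 1 at terminal histories (Player 2 gets the negative);
info assigns to each history the label of its information set; chance gives
the fixed action probabilities at chance histories.\<close>
record ('a, 'i) efg =
  hist :: "'a list set"
  player :: "'a list \<Rightarrow> pl"
  chance :: "'a list \<Rightarrow> 'a \<Rightarrow> real"
  util :: "'a list \<Rightarrow> real"
  info :: "'a list \<Rightarrow> 'i"

definition terminal :: "('a, 'i) efg \<Rightarrow> 'a list \<Rightarrow> bool" where
  "terminal G h \<longleftrightarrow> h \<in> hist G \<and> (\<forall>a. h @ [a] \<notin> hist G)"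

definition acts :: "('a, 'i) efg \<Rightarrow> 'a list \<Rightarrow> 'a set" where
  "acts G h = {a. h @ [a] \<in> hist G}"

definition iset :: "('a, 'i) efg \<Rightarrow> 'i \<Rightarrow> 'a list set" where
  "iset G I = {h \<in> hist G. \<not> terminal G h \<and> player G h \<noteq> Ch \<and> info G h = I}"

definition actsI :: "('a, 'i) efg \<Rightarrow> 'i \<Rightarrow> 'a set" where
  "actsI G I = acts G (SOME h. h \<in> iset G I)"

definition xseq :: "('a, 'i) efg \<Rightarrow> pl \<Rightarrow> 'a list \<Rightarrow> ('i \<times> 'a) list" where
  "xseq G p h = map (\<lambda>i. (info G (take i h), h ! i))
                    (filter (\<lambda>i. player G (take i h) = p) [0..<length h])"

definition wf_game :: "('a, 'i) efg \<Rightarrow> bool" where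
  "wf_game G \<longleftrightarrow>
     finite (hist G) \<and> [] \<in> hist G \<and>
     (\<forall>h a. h @ [a] \<in> hist G \<longrightarrow> h \<in> hist G) \<and>
     (\<forall>h \<in> hist G. \<not> terminal G h \<and> player G h = Ch \<longrightarrow>
         (\<forall>a \<in> acts G h. chance G h a \<ge> 0) \<and> (\<Sum>a \<in> acts G h. chance G h a) = 1) \<and>
     (\<forall>h \<in> hist G. \<forall>h' \<in> hist G.
         \<not> terminal G h \<and> \<not> terminal G h' \<and> player G h \<noteq> Ch \<and> info G h = info G h' \<longrightarrow>
           player G h' = player G h \<and> acts G h' = acts G h \<and>
           xseq G (player G h) h = xseq G (player G h) h')"

definition aprob :: "('a, 'i) efg \<Rightarrow> ('i \<Rightarrow> 'a \<Rightarrow> real) \<Rightarrow> ('i \<Rightarrow> 'a \<Rightarrow> real) \<Rightarrow> 'a list \<Rightarrow> 'a \<Rightarrow> real" where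
  "aprob G s1 s2 h a = (case player G h of Ch \<Rightarrow> chance G h a
                                        | P1 \<Rightarrow> s1 (info G h) a
                                        | P2 \<Rightarrow> s2 (info G h) a)"

definition uval :: "('a, 'i) efg \<Rightarrow> pl \<Rightarrow> 'a list \<Rightarrow> real" where
  "uval G p z = (if p = P1 then util G z else - util G z)"

definition pi_opp :: "('a, 'i) efg \<Rightarrow> ('i \<Rightarrow> 'a \<Rightarrow> real) \<Rightarrow> ('i \<Rightarrow> 'a \<Rightarrow> real) \<Rightarrow> pl \<Rightarrow> 'a list \<Rightarrow> real" where
  "pi_opp G s1 s2 p z = (\<Prod>i<length z. if player G (take i z) = p then 1
                                        else aprob G s1 s2 (take i z) (z ! i))"

definition pi_own :: "('a, 'i) efg \<Rightarrow> ('i \<Rightarrow> 'a \<Rightarrow> real) \<Rightarrow> ('i \<Rightarrow> 'a \<Rightarrow> real) \<Rightarrow> pl \<Rightarrow> 'a list \<Rightarrow> 'a list \<Rightarrow> real" where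
  "pi_own G s1 s2 p h z = (\<Prod>i\<in>{length h..<length z}. if player G (take i z) = p
                                        then aprob G s1 s2 (take i z) (z ! i) else 1)"

definition cfv :: "('a, 'i) efg \<Rightarrow> ('i \<Rightarrow> 'a \<Rightarrow> real) \<Rightarrow> ('i \<Rightarrow> 'a \<Rightarrow> real) \<Rightarrow> pl \<Rightarrow> 'a list \<Rightarrow> real" where
  "cfv G s1 s2 p h = (\<Sum>z \<in> {z. terminal G z \<and> prefix h z}.
                        pi_opp G s1 s2 p z * pi_own G s1 s2 p h z * uval G p z)"

definition cfvI :: "('a, 'i) efg \<Rightarrow> ('i \<Rightarrow> 'a \<Rightarrow> real) \<Rightarrow> ('i \<Rightarrow> 'a \<Rightarrow> real) \<Rightarrow> pl \<Rightarrow> 'i \<Rightarrow> 'a \<Rightarrow> real" where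
  "cfvI G s1 s2 p I a = (\<Sum>h \<in> iset G I. cfv G s1 s2 p (h @ [a]))"

definition eu :: "('a, 'i) efg \<Rightarrow> ('i \<Rightarrow> 'a \<Rightarrow> real) \<Rightarrow> ('i \<Rightarrow> 'a \<Rightarrow> real) \<Rightarrow> pl \<Rightarrow> real" where
  "eu G s1 s2 p = (\<Sum>z \<in> {z. terminal G z}.
                     (\<Prod>i<length z. aprob G s1 s2 (take i z) (z ! i)) * uval G p z)"

definition rm :: "'a set \<Rightarrow> ('a \<Rightarrow> real) \<Rightarrow> 'a \<Rightarrow> real" where
  "rm A x a = (if a \<in> A then
                 (if \<exists>b \<in> A. x b > 0 then max (x a) 0 / (\<Sum>b \<in> A. max (x b) 0)
                  else 1 / real (card A))
               else 0)"

definition strat :: "('a, 'i) efg \<Rightarrow> ('i \<Rightarrow> 'a \<Rightarrow> real) \<Rightarrow> 'i \<Rightarrow> 'a \<Rightarrow> real" where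
  "strat G R I = rm (actsI G I) (R I)"

text \<open>Regret update; cplus = True gives CFR+, cplus = False gives CFR.\<close>
definition upd :: "bool \<Rightarrow> 'a set \<Rightarrow> ('a \<Rightarrow> real) \<Rightarrow> ('a \<Rightarrow> real) \<Rightarrow> ('a \<Rightarrow> real) \<Rightarrow> 'a \<Rightarrow> real" where
  "upd cplus A s x v a =
     (let y = x a + v a - (\<Sum>b \<in> A. s b * v b) in if cplus then max y 0 else y)"

fun regs :: "('a, 'i) efg \<Rightarrow> bool \<Rightarrow> nat \<Rightarrow> ('i \<Rightarrow> 'a \<Rightarrow> real) \<times> ('i \<Rightarrow> 'a \<Rightarrow> real)" where
  "regs G cplus 0 = (\<lambda>I a. 0, \<lambda>I a. 0)"
| "regs G cplus (Suc t) =
     (let r1 = fst (regs G cplus t); r2 = snd (regs G cplus t);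
          s1 = strat G r1; s2 = strat G r2;
          r1' = (\<lambda>I. upd cplus (actsI G I) (s1 I) (r1 I) (cfvI G s1 s2 P1 I));
          s1' = strat G r1';
          r2' = (\<lambda>I. upd cplus (actsI G I) (s2 I) (r2 I) (cfvI G s1' s2 P2 I))
      in (r1', r2'))"

definition sigma :: "('a, 'i) efg \<Rightarrow> bool \<Rightarrow> pl \<Rightarrow> nat \<Rightarrow> 'i \<Rightarrow> 'a \<Rightarrow> real" where
  "sigma G cplus p t = strat G ((if p = P1 then fst else snd) (regs G cplus t))"

end

theory Submission
  imports Defs
begin


lemma hist_prefix:
  assumes wf: "wf_game G" and z: "z \<in> hist G" and p: "prefix y z"
  shows "y \<in> hist G"
proof -
  obtain zs where zs: "z = y @ zs" using p by (auto simp: prefix_def)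
  have "\<forall>y. y @ zs \<in> hist G \<longrightarrow> y \<in> hist G"
  proof (induction zs rule: rev_induct)
    case Nil then show ?case by simp
  next
    case (snoc c zs)
    then show ?case using wf unfolding wf_game_def by (metis append_assoc)
  qed
  then show ?thesis using z zs by blast
qed

lemma finite_hist: "wf_game G \<Longrightarrow> finite (hist G)"
  by (simp add: wf_game_def)

lemma finite_acts:
  assumes wf: "wf_game G" shows "finite (acts G h)"
proof -
  have "acts G h \<subseteq> last ` hist G" unfolding acts_def
    by (auto intro!: image_eqI[where x="h @ [_]"])
  then show ?thesis using finite_hist[OF wf] finite_surj by blast
qed

lemma finite_term: "wf_game G \<Longrightarrow> finite {z. terminal G z}"
  by (rule finite_subset[of _ "hist G"]) (auto simp: terminal_def wf_game_def)

lemma prefix_snoc_nth: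
  assumes "prefix h x" "x \<noteq> h"
  shows "prefix (h @ [x ! length h]) x" "length h < length x"
proof -
  obtain zs where x: "x = h @ zs" using assms by (auto simp: prefix_def)
  then obtain c zs' where "zs = c # zs'" using assms by (cases zs) auto
  then show "prefix (h @ [x ! length h]) x" "length h < length x" using x by auto
qed

lemma split_sum:
  assumes wf: "wf_game G" and X: "X \<subseteq> hist G"
  shows "(\<Sum>x\<in>{x\<in>X. prefix h x \<and> x \<noteq> h}. f x)
       = (\<Sum>a\<in>acts G h. \<Sum>x\<in>{x\<in>X. prefix (h @ [a]) x}. f x)"
proof -
  have fX: "finite X" using X finite_hist[OF wf] finite_subset by blast
  let ?S = "{x\<in>X. prefix h x \<and> x \<noteq> h}"
  have img: "(\<lambda>x. x ! length h) ` ?S \<subseteq> acts G h"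
  proof
    fix a assume "a \<in> (\<lambda>x. x ! length h) ` ?S"
    then obtain x where x: "x \<in> X" "prefix h x" "x \<noteq> h" "a = x ! length h" by auto
    then have "prefix (h @ [a]) x" using prefix_snoc_nth by blast
    then show "a \<in> acts G h" using hist_prefix[OF wf] x X by (auto simp: acts_def)
  qed
  have eq: "{x. x \<in> ?S \<and> x ! length h = a} = {x\<in>X. prefix (h @ [a]) x}" for a
  proof -
    have "prefix (h @ [a]) x \<Longrightarrow> x ! length h = a" for x
      by (auto simp: prefix_def nth_append)
    moreover have "prefix (h @ [a]) x \<Longrightarrow> prefix h x \<and> x \<noteq> h" for x
      by (auto simp: prefix_def)
    ultimately show ?thesis using prefix_snoc_nth by blast
  qed
  have "sum f ?S = (\<Sum>a\<in>acts G h. sum f {x. x \<in> ?S \<and> x ! length h = a})"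
    using sum.group[OF _ finite_acts[OF wf] img, of f] fX by simp
  also have "\<dots> = (\<Sum>a\<in>acts G h. \<Sum>x\<in>{x\<in>X. prefix (h @ [a]) x}. f x)"
    by (intro sum.cong refl, subst eq, rule refl)
  finally show ?thesis .
qed

lemma pi_own_step:
  assumes "prefix (h @ [a]) z"
  shows "pi_own G s1 s2 p h z = (if player G h = p then aprob G s1 s2 h a else 1) * pi_own G s1 s2 p (h @ [a]) z"
proof -
  have lt: "length h < length z" using assms prefix_length_le by fastforce
  have tk: "take (length h) z = h" and nth: "z ! length h = a" using assms
    by (auto simp: prefix_def nth_append)
  show ?thesis unfolding pi_own_def
    by (subst prod.atLeast_Suc_lessThan[OF lt]) (simp add: tk nth)
qed

lemma terminal_prefix_eq:
  assumes wf: "wf_game G" and t: "terminal G h" and z: "z \<in> hist G" and p: "prefix h z"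
  shows "z = h"
proof (rule ccontr)
  assume "z \<noteq> h"
  then have "prefix (h @ [z ! length h]) z" using prefix_snoc_nth p by blast
  then have "h @ [z ! length h] \<in> hist G" using hist_prefix[OF wf z] by blast
  then show False using t by (auto simp: terminal_def)
qed

lemma cfv_term:
  assumes wf: "wf_game G" and t: "terminal G z"
  shows "cfv G s1 s2 p z = pi_opp G s1 s2 p z * uval G p z"
proof -
  have "{z'. terminal G z' \<and> prefix z z'} = {z}"
    using terminal_prefix_eq[OF wf t] t by (auto simp: terminal_def)
  then show ?thesis by (simp add: cfv_def pi_own_def)
qed

lemma cfv_step:
  assumes wf: "wf_game G" and nt: "\<not> terminal G h"
  shows "cfv G s1 s2 p h = (\<Sum>a\<in>acts G h. (if player G h = p then aprob G s1 s2 h a else 1) * cfv G s1 s2 p (h @ [a]))"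
proof -
  have X: "{z. terminal G z} \<subseteq> hist G" by (auto simp: terminal_def)
  have "{z. terminal G z \<and> prefix h z} = {x\<in>{z. terminal G z}. prefix h x \<and> x \<noteq> h}"
    using nt by auto
  then have "cfv G s1 s2 p h = (\<Sum>a\<in>acts G h. \<Sum>z\<in>{x\<in>{z. terminal G z}. prefix (h @ [a]) x}.
          pi_opp G s1 s2 p z * pi_own G s1 s2 p h z * uval G p z)"
    unfolding cfv_def using split_sum[OF wf X] by simp
  also have "\<dots> = (\<Sum>a\<in>acts G h. (if player G h = p then aprob G s1 s2 h a else 1) * cfv G s1 s2 p (h @ [a]))"
    unfolding cfv_def sum_distrib_left
    apply (rule sum.cong[OF refl])
    apply (rule sum.cong)
     apply simp
    subgoal for a z using pi_own_step[of h a z G s1 s2 p] by (simp add: mult_ac)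
    done
  finally show ?thesis .
qed

lemma eu_cfv: "eu G s1 s2 p = cfv G s1 s2 p []"
  unfolding eu_def cfv_def pi_opp_def pi_own_def
  by (intro sum.cong) (auto simp: atLeast0LessThan prod.distrib[symmetric] intro!: prod.cong)

lemma pi_opp_eq:
  assumes "\<And>h a. player G h \<noteq> p \<Longrightarrow> aprob G s1 s2 h a = aprob G s1' s2' h a"
  shows "pi_opp G s1 s2 p z = pi_opp G s1' s2' p z"
  unfolding pi_opp_def using assms by (intro prod.cong) auto

definition own :: "pl \<Rightarrow> ('i \<Rightarrow> 'a \<Rightarrow> real) \<Rightarrow> ('i \<Rightarrow> 'a \<Rightarrow> real) \<Rightarrow> 'i \<Rightarrow> 'a \<Rightarrow> real" where
  "own p s1 s2 = (if p = P1 then s1 else s2)"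

lemma aprob_own: "player G h = p \<Longrightarrow> p \<noteq> Ch \<Longrightarrow> aprob G s1 s2 h a = own p s1 s2 (info G h) a"
  by (cases p) (auto simp: aprob_def own_def)

definition pnodes :: "('a, 'i) efg \<Rightarrow> pl \<Rightarrow> 'a list set" where
  "pnodes G p = {h \<in> hist G. \<not> terminal G h \<and> player G h = p}"

definition Dval where
  "Dval G s1 s2 s1' s2' p h = (\<Sum>a\<in>acts G h. aprob G s1' s2' h a * cfv G s1 s2 p (h @ [a])) - cfv G s1 s2 p h"

lemma diff_tree:
  assumes wf: "wf_game G"
    and agree: "\<And>h a. player G h \<noteq> p \<Longrightarrow> aprob G s1 s2 h a = aprob G s1' s2' h a"
    and h: "h \<in> hist G"
  shows "cfv G s1' s2' p h - cfv G s1 s2 p h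
       = (\<Sum>h'\<in>{h'\<in>pnodes G p. prefix h h'}. pi_own G s1' s2' p h h' * Dval G s1 s2 s1' s2' p h')"
proof -
  define L where "L = Max (length ` hist G)"
  have Lb: "length x \<le> L" if "x \<in> hist G" for x
    unfolding L_def using finite_hist[OF wf] that by simp
  show ?thesis using h
  proof (induction "L - length h" arbitrary: h rule: less_induct)
    case less
    show ?case
    proof (cases "terminal G h")
      case True
      have e: "{h'\<in>pnodes G p. prefix h h'} = {}"
        using terminal_prefix_eq[OF wf True] True by (auto simp: pnodes_def)
      have "pi_opp G s1 s2 p h = pi_opp G s1' s2' p h"
        by (rule pi_opp_eq) (rule agree)
      then show ?thesis unfolding e
        using cfv_term[OF wf True, of s1' s2' p] cfv_term[OF wf True, of s1 s2 p] by simp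
    next
      case nt: False
      define w' where "w' a = (if player G h = p then aprob G s1' s2' h a else 1)" for a
      define w where "w a = (if player G h = p then aprob G s1 s2 h a else 1)" for a
      let ?S = "\<lambda>x. {h'\<in>pnodes G p. prefix x h'}"
      let ?f = "\<lambda>x h'. pi_own G s1' s2' p x h' * Dval G s1 s2 s1' s2' p h'"
      have IH: "cfv G s1' s2' p (h @ [a]) - cfv G s1 s2 p (h @ [a]) = sum (?f (h @ [a])) (?S (h @ [a]))"
        if a: "a \<in> acts G h" for a
      proof -
        have ha: "h @ [a] \<in> hist G" using a by (simp add: acts_def)
        have "L - length (h @ [a]) < L - length h" using Lb[OF ha] by simp
        then show ?thesis using less.hyps ha by blast
      qed
      have "cfv G s1' s2' p h - cfv G s1 s2 p h
          = (\<Sum>a\<in>acts G h. w' a * cfv G s1' s2' p (h @ [a])) - (\<Sum>a\<in>acts G h. w a * cfv G s1 s2 p (h @ [a]))"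
        using cfv_step[OF wf nt] unfolding w_def w'_def by simp
      also have "\<dots> = (\<Sum>a\<in>acts G h. w' a * (cfv G s1' s2' p (h @ [a]) - cfv G s1 s2 p (h @ [a])))
           + ((\<Sum>a\<in>acts G h. w' a * cfv G s1 s2 p (h @ [a])) - (\<Sum>a\<in>acts G h. w a * cfv G s1 s2 p (h @ [a])))"
        by (simp add: sum_subtractf right_diff_distrib)
      also have "(\<Sum>a\<in>acts G h. w' a * (cfv G s1' s2' p (h @ [a]) - cfv G s1 s2 p (h @ [a])))
          = (\<Sum>a\<in>acts G h. \<Sum>h'\<in>?S (h @ [a]). ?f h h')"
      proof (rule sum.cong[OF refl])
        fix a assume a: "a \<in> acts G h"
        show "w' a * (cfv G s1' s2' p (h @ [a]) - cfv G s1 s2 p (h @ [a])) = (\<Sum>h'\<in>?S (h @ [a]). ?f h h')"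
          unfolding IH[OF a] sum_distrib_left
          by (rule sum.cong[OF refl]) (simp add: pi_own_step[of h a] w'_def)
      qed
      also have "\<dots> = (\<Sum>h'\<in>{h'\<in>pnodes G p. prefix h h' \<and> h' \<noteq> h}. ?f h h')"
        using split_sum[OF wf, where X="pnodes G p" and h=h and f="?f h"] by (simp add: pnodes_def)
      also have "((\<Sum>a\<in>acts G h. w' a * cfv G s1 s2 p (h @ [a])) - (\<Sum>a\<in>acts G h. w a * cfv G s1 s2 p (h @ [a])))
          = (if player G h = p then Dval G s1 s2 s1' s2' p h else 0)"
        using cfv_step[OF wf nt, of s1 s2 p] unfolding w_def w'_def Dval_def by simp
      finally have eq: "cfv G s1' s2' p h - cfv G s1 s2 p h
         = (\<Sum>h'\<in>{h'\<in>pnodes G p. prefix h h' \<and> h' \<noteq> h}. ?f h h') + (if player G h = p then Dval G s1 s2 s1' s2' p h else 0)" .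
      have fin: "finite {h'\<in>pnodes G p. prefix h h' \<and> h' \<noteq> h}"
        using finite_hist[OF wf] by (rule finite_subset[rotated]) (auto simp: pnodes_def)
      show ?thesis
      proof (cases "player G h = p")
        case True
        then have "?S h = insert h {h'\<in>pnodes G p. prefix h h' \<and> h' \<noteq> h}"
          using nt less.prems by (auto simp: pnodes_def)
        then show ?thesis using eq True fin by (simp add: pi_own_def)
      next
        case False
        then have "?S h = {h'\<in>pnodes G p. prefix h h' \<and> h' \<noteq> h}"
          by (auto simp: pnodes_def)
        then show ?thesis using eq False by simp
      qed
    qed
  qed
qed

lemma pi_own_xseq:
  assumes "p \<noteq> Ch"
  shows "pi_own G s1 s2 p [] h = prod_list (map (\<lambda>(I, a). own p s1 s2 I a) (xseq G p h))"
proof -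
  let ?P = "\<lambda>i. player G (take i h) = p"
  have "pi_own G s1 s2 p [] h = (\<Prod>i\<in>{i\<in>{0..<length h}. ?P i}. aprob G s1 s2 (take i h) (h ! i))"
    unfolding pi_own_def by (subst prod.inter_filter) auto
  also have "\<dots> = (\<Prod>i\<in>{i\<in>{0..<length h}. ?P i}. own p s1 s2 (info G (take i h)) (h ! i))"
    apply (intro prod.cong refl)
    subgoal for i using aprob_own[of G "take i h" p s1 s2 "h ! i"] assms by simp
    done
  also have "{i\<in>{0..<length h}. ?P i} = set (filter ?P [0..<length h])" by auto
  also have "(\<Prod>i\<in>set (filter ?P [0..<length h]). own p s1 s2 (info G (take i h)) (h ! i))
      = prod_list (map (\<lambda>i. own p s1 s2 (info G (take i h)) (h ! i)) (filter ?P [0..<length h]))"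
    by (rule prod.distinct_set_conv_list) simp
  finally show ?thesis by (simp add: xseq_def comp_def)
qed



lemma rm_sum1:
  assumes "finite A" "A \<noteq> {}"
  shows "(\<Sum>a\<in>A. rm A x a) = 1"
proof (cases "\<exists>b\<in>A. x b > 0")
  case True
  then obtain b where b: "b \<in> A" "x b > 0" by blast
  have "max (x b) 0 \<le> (\<Sum>c\<in>A. max (x c) 0)"
    by (rule member_le_sum) (use assms b in auto)
  then have S: "(\<Sum>c\<in>A. max (x c) 0) > 0" using b by linarith
  have "(\<Sum>a\<in>A. rm A x a) = (\<Sum>a\<in>A. max (x a) 0 / (\<Sum>c\<in>A. max (x c) 0))"
    using True by (intro sum.cong) (auto simp: rm_def)
  also have "\<dots> = 1" using S by (simp add: sum_divide_distrib[symmetric])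
  finally show ?thesis .
next
  case False
  then have "(\<Sum>a\<in>A. rm A x a) = (\<Sum>a\<in>A. 1 / real (card A))"
    by (intro sum.cong) (auto simp: rm_def)
  then show ?thesis using assms by simp
qed

lemma rm_upd:
  "rm A (upd c A s x v) = rm A (\<lambda>a. x a + v a - (\<Sum>b\<in>A. s b * v b))"
proof -
  have e1: "(\<exists>b\<in>A. upd c A s x v b > 0) \<longleftrightarrow> (\<exists>b\<in>A. x b + v b - (\<Sum>b\<in>A. s b * v b) > 0)"
    by (cases c) (auto simp: upd_def Let_def less_max_iff_disj)
  have e2: "max (upd c A s x v a) 0 = max (x a + v a - (\<Sum>b\<in>A. s b * v b)) 0" for a
    by (cases c) (auto simp: upd_def Let_def)
  show ?thesis unfolding rm_def e1 e2 by (rule ext) simp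
qed

lemma rm_improve:
  assumes A: "finite A"
  shows "(\<Sum>a\<in>A. rm A x a * v a) \<le> (\<Sum>a\<in>A. rm A (upd c A (rm A x) x v) a * v a)"
proof (cases "A = {}")
  case True then show ?thesis by simp
next
  case ne: False
  define s where "s = rm A x"
  define c0 where "c0 = (\<Sum>b\<in>A. s b * v b)"
  define d where "d a = v a - c0" for a
  define z where "z a = x a + d a" for a
  define s' where "s' = rm A z"
  have s'eq: "rm A (upd c A (rm A x) x v) = s'"
    unfolding rm_upd s'_def z_def d_def c0_def s_def by (simp add: algebra_simps)
  have sum_s: "(\<Sum>a\<in>A. s a) = 1" unfolding s_def using rm_sum1[OF A ne] .
  have sum_s': "(\<Sum>a\<in>A. s' a) = 1" unfolding s'_def using rm_sum1[OF A ne] .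
  have sd: "(\<Sum>a\<in>A. s a * d a) = 0"
    unfolding d_def right_diff_distrib sum_subtractf sum_distrib_right[symmetric] sum_s c0_def by simp
  have s'd: "(\<Sum>a\<in>A. s' a * v a) = (\<Sum>a\<in>A. s' a * d a) + c0"
    unfolding d_def right_diff_distrib sum_subtractf sum_distrib_right[symmetric] sum_s' by simp
  have xd: "(\<Sum>a\<in>A. max (x a) 0 * d a) = 0"
  proof (cases "\<exists>b\<in>A. x b > 0")
    case True
    define S where "S = (\<Sum>c\<in>A. max (x c) 0)"
    obtain b where b: "b \<in> A" "x b > 0" using True by blast
    have "max (x b) 0 \<le> S" unfolding S_def
      by (rule member_le_sum) (use A b in auto)
    then have S: "S > 0" using b by linarith
    have "(\<Sum>a\<in>A. max (x a) 0 * d a) = (\<Sum>a\<in>A. S * (s a * d a))"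
      using True S by (intro sum.cong) (auto simp: s_def rm_def S_def[symmetric])
    also have "\<dots> = 0" by (simp add: sum_distrib_left[symmetric] sd)
    finally show ?thesis .
  next
    case False
    then show ?thesis by (intro sum.neutral) auto
  qed
  have pe: "max (z a) 0 * d a \<ge> max (x a) 0 * d a" for a
  proof (cases "d a \<ge> 0")
    case True
    have "max (z a) 0 \<ge> max (x a) 0" using True by (simp add: z_def)
    then show ?thesis using True by (simp add: mult_right_mono)
  next
    case False
    have "max (z a) 0 \<le> max (x a) 0" using False by (simp add: z_def)
    then show ?thesis using False by (simp add: mult_right_mono_neg)
  qed
  have zd: "(\<Sum>a\<in>A. max (z a) 0 * d a) \<ge> 0"
    using sum_mono[of A "\<lambda>a. max (x a) 0 * d a" "\<lambda>a. max (z a) 0 * d a", OF pe] xd by simp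
  have key: "(\<Sum>a\<in>A. s' a * d a) \<ge> 0"
  proof (cases "\<exists>b\<in>A. z b > 0")
    case True
    define S where "S = (\<Sum>c\<in>A. max (z c) 0)"
    obtain b where b: "b \<in> A" "z b > 0" using True by blast
    have "max (z b) 0 \<le> S" unfolding S_def
      by (rule member_le_sum) (use A b in auto)
    then have S: "S > 0" using b by linarith
    have "(\<Sum>a\<in>A. s' a * d a) = (\<Sum>a\<in>A. max (z a) 0 * d a) / S"
      unfolding sum_divide_distrib
      using True by (intro sum.cong) (auto simp: s'_def rm_def S_def[symmetric])
    then show ?thesis using zd S by simp
  next
    case nQ: False
    show ?thesis
    proof (cases "\<exists>b\<in>A. x b > 0")
      case False
      have "s' = s" unfolding s'_def s_def rm_def using False nQ by auto
      then show ?thesis using sd by simp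
    next
      case True
      then obtain b where b: "b \<in> A" "x b > 0" by blast
      have neg: "max (x a) 0 * d a \<le> 0" if "a \<in> A" for a
      proof (cases "x a > 0")
        case True
        then have "d a < 0" using nQ that by (auto simp: z_def)
        then show ?thesis using True mult_pos_neg[of "x a" "d a"] by simp
      qed simp
      have "d b < 0" using nQ b by (auto simp: z_def)
      then have nb: "max (x b) 0 * d b < 0" using b by (simp add: mult_pos_neg)
      have "(\<Sum>a\<in>A. max (x a) 0 * d a) = max (x b) 0 * d b + (\<Sum>a\<in>A - {b}. max (x a) 0 * d a)"
        using A b by (simp add: sum.remove)
      also have "(\<Sum>a\<in>A - {b}. max (x a) 0 * d a) \<le> 0" using neg by (intro sum_nonpos) auto
      finally have "(\<Sum>a\<in>A. max (x a) 0 * d a) < 0" using nb by linarith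
      then show ?thesis using xd by simp
    qed
  qed
  show ?thesis unfolding s'eq using s'd key by (simp add: c0_def s_def)
qed



lemma improve:
  assumes wf: "wf_game G" and pCh: "p \<noteq> Ch"
    and agree: "\<And>h a. player G h \<noteq> p \<Longrightarrow> aprob G s1 s2 h a = aprob G s1' s2' h a"
    and nonneg: "\<And>I a. own p s1' s2' I a \<ge> 0"
    and local: "\<And>I. (\<Sum>a\<in>actsI G I. own p s1 s2 I a * cfvI G s1 s2 p I a)
                   \<le> (\<Sum>a\<in>actsI G I. own p s1' s2' I a * cfvI G s1 s2 p I a)"
  shows "eu G s1 s2 p \<le> eu G s1' s2' p"
proof -
  let ?c = "\<lambda>h. pi_own G s1' s2' p [] h"
  let ?D = "Dval G s1 s2 s1' s2' p"
  have h0: "[] \<in> hist G" using wf by (simp add: wf_game_def)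
  have "eu G s1' s2' p - eu G s1 s2 p = (\<Sum>h\<in>pnodes G p. ?c h * ?D h)"
    unfolding eu_cfv using diff_tree[OF wf agree h0] by simp
  have finP: "finite (pnodes G p)"
    using finite_hist[OF wf] by (rule finite_subset[rotated]) (auto simp: pnodes_def)
  have "(\<Sum>h\<in>pnodes G p. ?c h * ?D h)
      = (\<Sum>I\<in>info G ` pnodes G p. \<Sum>h\<in>{h. h \<in> pnodes G p \<and> info G h = I}. ?c h * ?D h)"
    by (rule sum.group[symmetric]) (use finP in auto)
  also have "\<dots> \<ge> 0"
  proof (rule sum_nonneg)
    fix I assume "I \<in> info G ` pnodes G p"
    then obtain h0 where h0: "h0 \<in> pnodes G p" "info G h0 = I" by blast
    have h0': "h0 \<in> hist G" "\<not> terminal G h0" "player G h0 = p" using h0 by (auto simp: pnodes_def)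
    have wfi: "player G h' = player G h \<and> acts G h' = acts G h \<and> xseq G (player G h) h = xseq G (player G h) h'"
      if "h \<in> hist G" "h' \<in> hist G" "\<not> terminal G h" "\<not> terminal G h'" "player G h \<noteq> Ch" "info G h = info G h'"
      for h h' using wf that unfolding wf_game_def by blast
    have iseq: "{h. h \<in> pnodes G p \<and> info G h = I} = iset G I"
    proof
      show "{h. h \<in> pnodes G p \<and> info G h = I} \<subseteq> iset G I"
        using pCh by (auto simp: pnodes_def iset_def)
      show "iset G I \<subseteq> {h. h \<in> pnodes G p \<and> info G h = I}"
      proof
        fix h assume "h \<in> iset G I"
        then have "h \<in> hist G" "\<not> terminal G h" "info G h = I" by (auto simp: iset_def)
        then show "h \<in> {h. h \<in> pnodes G p \<and> info G h = I}"
          using wfi[of h0 h] h0' h0 pCh by (auto simp: pnodes_def)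
      qed
    qed
    have inI: "h \<in> hist G \<and> \<not> terminal G h \<and> player G h = p \<and> info G h = I" if "h \<in> iset G I" for h
      using that iseq by (auto simp: pnodes_def)
    have cc: "?c h = ?c h0" if "h \<in> iset G I" for h
    proof -
      have "xseq G p h0 = xseq G p h" using wfi[of h0 h] inI[OF that] h0' h0 pCh by simp
      then show ?thesis by (simp add: pi_own_xseq[OF pCh])
    qed
    have h0I: "h0 \<in> iset G I" using iseq h0 by blast
    have sI: "(SOME h. h \<in> iset G I) \<in> iset G I"
      using h0I by (rule someI)
    have acteq: "acts G h = actsI G I" if "h \<in> iset G I" for h
      unfolding actsI_def using inI[OF that] inI[OF sI] wfi[of h "SOME h. h \<in> iset G I"] pCh by simp
    have c0: "?c h0 \<ge> 0"
      unfolding pi_own_def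
      apply (intro prod_nonneg)
      subgoal for i using aprob_own[of G "take i h0" p s1' s2' "h0 ! i"] nonneg pCh by simp
      done
    have Deq: "?D h = (\<Sum>a\<in>actsI G I. own p s1' s2' I a * cfv G s1 s2 p (h @ [a]))
                    - (\<Sum>a\<in>actsI G I. own p s1 s2 I a * cfv G s1 s2 p (h @ [a]))"
      if "h \<in> iset G I" for h
      using inI[OF that] acteq[OF that] cfv_step[OF wf, of h s1 s2 p]
        aprob_own[OF _ pCh, of G h s1 s2] aprob_own[OF _ pCh, of G h s1' s2']
      unfolding Dval_def by simp
    have "(\<Sum>h\<in>{h. h \<in> pnodes G p \<and> info G h = I}. ?c h * ?D h) = ?c h0 * (\<Sum>h\<in>iset G I. ?D h)"
      unfolding iseq sum_distrib_left using cc by simp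
    also have "(\<Sum>h\<in>iset G I. ?D h)
       = (\<Sum>a\<in>actsI G I. own p s1' s2' I a * cfvI G s1 s2 p I a) - (\<Sum>a\<in>actsI G I. own p s1 s2 I a * cfvI G s1 s2 p I a)"
      unfolding cfvI_def sum_distrib_left using Deq
      by (simp add: sum_subtractf sum.swap[of _ "iset G I"])
    finally show "0 \<le> (\<Sum>h\<in>{h. h \<in> pnodes G p \<and> info G h = I}. ?c h * ?D h)"
      using c0 local[of I] by simp
  qed
  finally show ?thesis using \<open>eu G s1' s2' p - eu G s1 s2 p = _\<close> by simp
qed



lemma rm_nonneg: "rm A x a \<ge> 0"
  unfolding rm_def by (auto intro!: divide_nonneg_nonneg sum_nonneg)

lemma finite_actsI: "wf_game G \<Longrightarrow> finite (actsI G I)"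
  unfolding actsI_def by (rule finite_acts)

theorem theorem3:
  fixes G :: "('a, 'i) efg" and cplus :: bool and t :: nat
  assumes "wf_game G"
  shows "eu G (sigma G cplus P1 (Suc t)) (sigma G cplus P2 t) P1
           \<ge> eu G (sigma G cplus P1 t) (sigma G cplus P2 t) P1
       \<and> eu G (sigma G cplus P1 (Suc t)) (sigma G cplus P2 (Suc t)) P2
           \<ge> eu G (sigma G cplus P1 (Suc t)) (sigma G cplus P2 t) P2"
proof -
  note wf = assms
  define r1 where "r1 = fst (regs G cplus t)"
  define r2 where "r2 = snd (regs G cplus t)"
  define s1 where "s1 = strat G r1"
  define s2 where "s2 = strat G r2"
  define r1' where "r1' = (\<lambda>I. upd cplus (actsI G I) (s1 I) (r1 I) (cfvI G s1 s2 P1 I))"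
  define s1' where "s1' = strat G r1'"
  define r2' where "r2' = (\<lambda>I. upd cplus (actsI G I) (s2 I) (r2 I) (cfvI G s1' s2 P2 I))"
  define s2' where "s2' = strat G r2'"
  have e1: "sigma G cplus P1 t = s1" "sigma G cplus P2 t = s2"
    by (simp_all add: sigma_def s1_def s2_def r1_def r2_def)
  have e2: "sigma G cplus P1 (Suc t) = s1'" "sigma G cplus P2 (Suc t) = s2'"
    by (simp_all add: sigma_def s1'_def s2'_def r1'_def r2'_def s1_def s2_def r1_def r2_def Let_def)
  have A: "eu G s1 s2 P1 \<le> eu G s1' s2 P1"
  proof (rule improve[OF wf])
    show "P1 \<noteq> Ch" by simp
    show "aprob G s1 s2 h a = aprob G s1' s2 h a" if "player G h \<noteq> P1" for h a
      using that by (cases "player G h") (auto simp: aprob_def)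
    show "own P1 s1' s2 I a \<ge> 0" for I a by (simp add: own_def s1'_def strat_def rm_nonneg)
    show "(\<Sum>a\<in>actsI G I. own P1 s1 s2 I a * cfvI G s1 s2 P1 I a)
        \<le> (\<Sum>a\<in>actsI G I. own P1 s1' s2 I a * cfvI G s1 s2 P1 I a)" for I
      unfolding own_def s1'_def r1'_def strat_def
      using rm_improve[OF finite_actsI[OF wf], of I "r1 I" "cfvI G s1 s2 P1 I" cplus]
      by (simp add: s1_def strat_def)
  qed
  have B: "eu G s1' s2 P2 \<le> eu G s1' s2' P2"
  proof (rule improve[OF wf])
    show "P2 \<noteq> Ch" by simp
    show "aprob G s1' s2 h a = aprob G s1' s2' h a" if "player G h \<noteq> P2" for h a
      using that by (cases "player G h") (auto simp: aprob_def)
    show "own P2 s1' s2' I a \<ge> 0" for I a by (simp add: own_def s2'_def strat_def rm_nonneg)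
    show "(\<Sum>a\<in>actsI G I. own P2 s1' s2 I a * cfvI G s1' s2 P2 I a)
        \<le> (\<Sum>a\<in>actsI G I. own P2 s1' s2' I a * cfvI G s1' s2 P2 I a)" for I
      unfolding own_def s2'_def r2'_def strat_def
      using rm_improve[OF finite_actsI[OF wf], of I "r2 I" "cfvI G s1' s2 P2 I" cplus]
      by (simp add: s2_def strat_def)
  qed
  show ?thesis using A B unfolding e1 e2 by simp
qed

end
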